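(* For every $x\in B_1(e_N)$, $$\lim_{s\to0^+}\mathbb{G}_\alpha[\Gamma_s](x)=+\infty,\qquad\text{where }\ \mathbb{G}_\alpha[\Gamma_s](x)=\int_{B_1(e_N)}G_\alpha(x,y)\Gamma_s(y)dy,\quad \Gamma_s(y)=\frac{c_{N,\alpha}}{|y+se_N|^{N+2\alpha}}.$$
   Context: $N\ge2$, $\alpha\in(0,1)$, $e_N=(0,\dots,0,1)$, $B_1(e_N)$ the open unit ball centered at $e_N$, $c_{N,\alpha}=\left(\int_{\mathbb{R}^N}\frac{1-\cos(z_1)}{|z|^{N+2\alpha}}dz\right)^{-1}$. $G_\alpha$ is the Green kernel of the fractional Laplacian $(-\Delta)^\alpha$ in $B_1(e_N)$ with zero exterior condition. *)

theory Defs
  imports "HOL-Analysis.Analysis"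
begin

text \<open>Normalising constant c_{N,alpha} of the fractional Laplacian in R^N, N = CARD('n);
  the coordinate i plays the role of z_1 (the value is independent of i by symmetry).\<close>
definition c_frac :: "'n::finite \<Rightarrow> real \<Rightarrow> real" where
  "c_frac i \<alpha> = 1 / (LINT z|(lborel :: (real^'n) measure).
      (1 - cos (z $ i)) / norm z powr (real CARD('n) + 2 * \<alpha>))"

text \<open>Constant in the Riesz / Blumenthal-Getoor-Ray formula for the Green function of
  (-Delta)^alpha (symbol |xi|^(2 alpha)) in a ball, N > 2 alpha.\<close>
definition kappa_green :: "nat \<Rightarrow> real \<Rightarrow> real" where
  "kappa_green N \<alpha> = Gamma (real N / 2) / (2 powr (2 * \<alpha>) * pi powr (real N / 2) * (Gamma \<alpha>)\<^sup>2)"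

text \<open>Green kernel of (-Delta)^alpha in the unit ball B_1(e) with zero exterior condition
  (extended by 0 outside B_1(e) x B_1(e) and on the diagonal).\<close>
definition green_ball :: "real \<Rightarrow> real^'n::finite \<Rightarrow> real^'n \<Rightarrow> real^'n \<Rightarrow> real" where
  "green_ball \<alpha> e x y =
     (if x \<in> ball e 1 \<and> y \<in> ball e 1 \<and> x \<noteq> y then
        kappa_green CARD('n) \<alpha> * dist x y powr (2 * \<alpha> - real CARD('n)) *
        (LBINT t=0..((1 - (dist x e)\<^sup>2) * (1 - (dist y e)\<^sup>2) / (dist x y)\<^sup>2).
            t powr (\<alpha> - 1) * (t + 1) powr (- real CARD('n) / 2))
      else 0)"

end

theory Submission
  imports Defs "HOL-Analysis.Analysis" "HOL-Real_Asymp.Real_Asymp"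
begin

lemma h_int:
  fixes a :: real
  assumes a: "0<a" "a<1"
  shows "set_integrable lborel {0<..} (\<lambda>t. t powr (a-1) * (1+t) powr (-a-1) + (1+t) powr (a-2))"
proof -
  define H where "H = (\<lambda>t::real. t powr a * (1+t) powr (-a) / a - (1+t) powr (a-1) / (1-a))"
  have "set_integrable lborel (einterval 0 \<infinity>) (\<lambda>t. t powr (a-1) * (1+t) powr (-a-1) + (1+t) powr (a-2))"
  proof (rule interval_integral_FTC_nonneg(1)[where F=H and A="- inverse (1-a)" and B="inverse a"])
    show "(0::ereal) < \<infinity>" by simp
    fix x :: real assume x: "0 < ereal x" "ereal x < \<infinity>"
    then have x0: "x > 0" by simp
    show "(H has_real_derivative (x powr (a-1) * (1+x) powr (-a-1) + (1+x) powr (a-2))) (at x)"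
    proof -
      have "(H has_real_derivative ((a * x powr (a-1) * (1+x) powr (-a) + x powr a * ((-a) * (1+x) powr (-a-1))) / a
              - ((a-1) * (1+x) powr (a-1-1)) / (1-a))) (at x)"
        unfolding H_def using x0 a
        by (auto intro!: derivative_eq_intros)
      moreover have "(a * x powr (a-1) * (1+x) powr (-a) + x powr a * ((-a) * (1+x) powr (-a-1))) / a
              - ((a-1) * (1+x) powr (a-1-1)) / (1-a) = x powr (a-1) * (1+x) powr (-a-1) + (1+x) powr (a-2)"
      proof -
        have e1: "(1+x) powr (-a) = (1+x) * (1+x) powr (-a-1)" using x0
          by (simp add: powr_mult_base)
        have e2: "x powr a = x * x powr (a-1)" using x0 by (simp add: powr_mult_base)
        show ?thesis using a x0 unfolding e1 e2 by (simp add: field_simps)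
      qed
      ultimately show ?thesis by simp
    qed
    show "isCont (\<lambda>t. t powr (a-1) * (1+t) powr (-a-1) + (1+t) powr (a-2)) x"
      using x0 by (auto intro!: continuous_intros)
  next
    show "AE x in lborel. 0 < ereal x \<longrightarrow> ereal x < \<infinity> \<longrightarrow> 0 \<le> x powr (a-1) * (1+x) powr (-a-1) + (1+x) powr (a-2)"
      by auto
  next
    show "((H \<circ> real_of_ereal) \<longlongrightarrow> - inverse (1-a)) (at_right 0)"
      unfolding H_def zero_ereal_def ereal_tendsto_simps using a
      by real_asymp
  next
    show "((H \<circ> real_of_ereal) \<longlongrightarrow> inverse a) (at_left \<infinity>)"
      unfolding H_def ereal_tendsto_simps using a
      by real_asymp
  qed
  then show ?thesis using einterval_eq_Ici[of 0] by (simp add: zero_ereal_def)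
qed

lemma g_bound:
  fixes a m t :: real
  assumes a: "0<a" "a<1" and m: "m \<ge> 2" and t: "t > 0"
  shows "t powr (a-1) * (t+1) powr (- m / 2) \<le> 4 * (t powr (a-1) * (1+t) powr (-a-1) + (1+t) powr (a-2))"
proof (cases "t \<le> 1")
  case True
  have A: "(t+1) powr (- m / 2) \<le> 1"
    using powr_mono[of "- m/2" 0 "t+1"] t m by auto
  have B1: "(1+t) powr (-a-1) \<ge> 2 powr (-a-1)"
    using powr_mono2'[of "-a-1" "1+t" 2] t a True by auto
  have B2: "2 powr (-a-1) \<ge> (2::real) powr (-2)"
    using powr_mono[of "-2" "-a-1" 2] a by auto
  have B3: "(2::real) powr (-2) = 1/4" by (simp add: powr_minus powr_realpow[of 2 2, simplified])
  have tp: "t powr (a-1) \<ge> 0" by simp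
  have "t powr (a-1) * (t+1) powr (- m / 2) \<le> t powr (a-1)"
    using mult_left_mono[OF A tp] by simp
  also have "\<dots> \<le> 4 * (t powr (a-1) * (1+t) powr (-a-1))"
    using mult_left_mono[of "1/4" "(1+t) powr (-a-1)" "t powr (a-1)"] B1 B2 B3 tp by auto
  also have "\<dots> \<le> 4 * (t powr (a-1) * (1+t) powr (-a-1) + (1+t) powr (a-2))" by simp
  finally show ?thesis .
next
  case False
  have A: "(t+1) powr (- m / 2) \<le> (t+1) powr (-1)"
    using powr_mono[of "- m/2" "-1" "t+1"] t m by auto
  have B: "t powr (a-1) \<le> ((1+t)/2) powr (a-1)"
    using powr_mono2'[of "a-1" "(1+t)/2" t] False a by auto
  have C: "((1+t)/2) powr (a-1) = (1+t) powr (a-1) / 2 powr (a-1)"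
    by (simp add: powr_divide)
  have D: "(2::real) powr (a-1) \<ge> 2 powr (-1)"
    using powr_mono[of "-1" "a-1" 2] a by auto
  have D2: "(2::real) powr (-1) = 1/2" by (simp add: powr_minus)
  have E: "t powr (a-1) \<le> 2 * (1+t) powr (a-1)"
  proof -
    have "(1+t) powr (a-1) / 2 powr (a-1) \<le> (1+t) powr (a-1) / (1/2)"
      using D D2 by (intro divide_left_mono) auto
    then show ?thesis using B C by simp
  qed
  have "t powr (a-1) * (t+1) powr (- m / 2) \<le> (2 * (1+t) powr (a-1)) * (t+1) powr (-1)"
    using mult_mono[OF E A] by simp
  also have "\<dots> = 2 * (1+t) powr (a-2)"
  proof -
    have "(1+t) powr (a-1) * (1+t) powr (-1) = (1+t) powr (a-2)"
      by (subst powr_add[symmetric]) simp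
    then show ?thesis by (simp add: add.commute)
  qed
  also have "\<dots> \<le> 4 * (t powr (a-1) * (1+t) powr (-a-1) + (1+t) powr (a-2))" by simp
  finally show ?thesis .
qed

lemma g_int:
  fixes a m :: real
  assumes a: "0<a" "a<1" and m: "m \<ge> 2"
  shows "set_integrable lborel {0<..} (\<lambda>t. t powr (a-1) * (t+1) powr (- m / 2))"
proof (rule set_integrable_bound[OF set_integrable_mult_right[OF h_int[OF a], of 4]])
  show "set_borel_measurable lborel {0<..} (\<lambda>t. t powr (a-1) * (t+1) powr (- m / 2))"
    unfolding set_borel_measurable_def by measurable
  show "AE x in lborel. x \<in> {0<..} \<longrightarrow> norm (x powr (a-1) * (x+1) powr (- m / 2))
     \<le> norm (4 * (x powr (a-1) * (1+x) powr (-a-1) + (1+x) powr (a-2)))"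
    using g_bound[OF a m] by (auto intro!: AE_I2 simp: abs_of_nonneg)
qed


lemma powr_int_0R:
  fixes a R :: real
  assumes a: "0<a" and R: "0 < R"
  shows "set_integrable lborel {0<..<R} (\<lambda>t. t powr (a-1))"
    "(LINT t:{0<..<R}|lborel. t powr (a-1)) = R powr a / a"
proof -
  have *: "set_integrable lborel (einterval 0 (ereal R)) (\<lambda>t. t powr (a-1)) \<and>
        (LBINT t=0..ereal R. t powr (a-1)) = R powr a / a - 0"
  proof (intro conjI)
    note I = interval_integral_FTC_nonneg[where F="\<lambda>t. t powr a / a" and a=0 and b="ereal R"
        and f="\<lambda>t. t powr (a-1)" and A=0 and B="R powr a / a"]
    have p1: "(0::ereal) < ereal R" using R by simp
    have p2: "((\<lambda>t. t powr a / a) has_real_derivative x powr (a-1)) (at x)" if "0 < ereal x" "ereal x < ereal R" for x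
    proof -
      have x: "x > 0" using that by simp
      show ?thesis using x a by (auto intro!: derivative_eq_intros)
    qed
    have p3: "isCont (\<lambda>t. t powr (a-1)) x" if "0 < ereal x" "ereal x < ereal R" for x
      using that by (auto intro!: continuous_intros)
    have p4: "AE x in lborel. 0 < ereal x \<longrightarrow> ereal x < ereal R \<longrightarrow> 0 \<le> x powr (a-1)" by simp
    have p5: "(((\<lambda>t. t powr a / a) \<circ> real_of_ereal) \<longlongrightarrow> 0) (at_right 0)"
      unfolding zero_ereal_def ereal_tendsto_simps using a by real_asymp
    have p6: "(((\<lambda>t. t powr a / a) \<circ> real_of_ereal) \<longlongrightarrow> R powr a / a) (at_left (ereal R))"
      unfolding ereal_tendsto_simps using a R
      by (auto intro!: tendsto_eq_intros)
    show "set_integrable lborel (einterval 0 (ereal R)) (\<lambda>t. t powr (a-1))"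
      by (rule I(1)[OF p1 p2 p3 p4 p5 p6])
    show "(LBINT t=0..ereal R. t powr (a-1)) = R powr a / a - 0"
      by (rule I(2)[OF p1 p2 p3 p4 p5 p6])
  qed
  have e: "einterval 0 (ereal R) = {0<..<R}" using einterval_eq_Icc[of 0 R] by (simp add: zero_ereal_def)
  show "set_integrable lborel {0<..<R} (\<lambda>t. t powr (a-1))" using * e by simp
  show "(LINT t:{0<..<R}|lborel. t powr (a-1)) = R powr a / a"
    using * R interval_integral_Ioo[of 0 "ereal R" "\<lambda>t. t powr (a-1)"] by (simp add: zero_ereal_def)
qed


lemma g_sub_mono:
  fixes a m :: real
  assumes a: "0<a" "a<1" and m: "m \<ge> 2" and S: "S \<in> sets lborel" "T \<in> sets lborel" "S \<subseteq> T" "T \<subseteq> {0<..}"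
  shows "(LINT t:S|lborel. t powr (a-1) * (t+1) powr (- m / 2)) \<le> (LINT t:T|lborel. t powr (a-1) * (t+1) powr (- m / 2))"
proof -
  have iT: "set_integrable lborel T (\<lambda>t. t powr (a-1) * (t+1) powr (- m / 2))"
    using set_integrable_subset[OF g_int[OF a m] S(2) S(4)] .
  have iS: "set_integrable lborel S (\<lambda>t. t powr (a-1) * (t+1) powr (- m / 2))"
    using set_integrable_subset[OF iT S(1) S(3)] .
  show ?thesis
    using iS iT S unfolding set_lebesgue_integral_def set_integrable_def
    by (intro integral_mono) (auto simp: indicator_def)
qed

lemma g_lower:
  fixes a m R :: real
  assumes a: "0<a" "a<1" and m: "m \<ge> 2" and R: "0 < R" "R \<le> 1"
  shows "(LINT t:{0<..<R}|lborel. t powr (a-1) * (t+1) powr (- m / 2)) \<ge> 2 powr (- m / 2) * (R powr a / a)"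
proof -
  have iT: "set_integrable lborel {0<..<R} (\<lambda>t. t powr (a-1) * (t+1) powr (- m / 2))"
    by (rule set_integrable_subset[OF g_int[OF a m]]) auto
  have "2 powr (- m / 2) * (R powr a / a) = (LINT t:{0<..<R}|lborel. 2 powr (- m / 2) * t powr (a-1))"
    using powr_int_0R[OF a(1) R(1)] by simp
  also have "\<dots> \<le> (LINT t:{0<..<R}|lborel. t powr (a-1) * (t+1) powr (- m / 2))"
  proof (rule set_integral_mono)
    show "set_integrable lborel {0<..<R} (\<lambda>t. 2 powr (- m / 2) * t powr (a-1))"
      using powr_int_0R[OF a(1) R(1)] by simp
    show "set_integrable lborel {0<..<R} (\<lambda>t. t powr (a-1) * (t+1) powr (- m / 2))" by (rule iT)
    fix t assume t: "t \<in> {0<..<R}"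
    have "(t+1) powr (- m / 2) \<ge> 2 powr (- m / 2)"
      using powr_mono2'[of "- m/2" "t+1" 2] t R m by auto
    then show "2 powr (- m / 2) * t powr (a-1) \<le> t powr (a-1) * (t+1) powr (- m / 2)"
      by (simp add: mult.commute mult_left_mono)
  qed
  finally show ?thesis .
qed

lemma shell_integrable:
  fixes f :: "'a::euclidean_space \<Rightarrow> real" and A :: "nat \<Rightarrow> 'a set" and M :: "nat \<Rightarrow> real"
  assumes fm: "f \<in> borel_measurable lborel" and f0: "\<And>y. 0 \<le> f y"
    and Am: "\<And>k. A k \<in> sets lborel" and Afin: "\<And>k. emeasure lborel (A k) < \<infinity>"
    and cov: "\<And>y. f y \<noteq> 0 \<Longrightarrow> \<exists>k. y \<in> A k"
    and bnd: "\<And>k y. y \<in> A k \<Longrightarrow> f y \<le> M k" and M0: "\<And>k. 0 \<le> M k"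
    and sm: "summable (\<lambda>k. M k * measure lborel (A k))"
  shows "integrable lborel f"
proof (rule integrableI_bounded[OF fm])
  have pw: "ennreal (norm (f y)) \<le> (\<Sum>k. ennreal (M k) * indicator (A k) y)" for y
  proof (cases "f y = 0")
    case True then show ?thesis by simp
  next
    case False
    then obtain k where k: "y \<in> A k" using cov by blast
    have "ennreal (norm (f y)) \<le> ennreal (M k) * indicator (A k) y"
      using k bnd[OF k] f0[of y] by (simp add: ennreal_leI)
    also have "\<dots> \<le> (\<Sum>i. ennreal (M i) * indicator (A i) y)"
    proof -
      define h where "h = (\<lambda>i. ennreal (M i) * indicator (A i) y)"
      have "(\<Sum>i\<in>{k}. h i) \<le> suminf h" by (rule sum_le_suminf) auto
      then have "h k \<le> suminf h" by simp
      then show ?thesis by (simp only: h_def)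
    qed
    finally show ?thesis .
  qed
  have "(\<integral>\<^sup>+ y. ennreal (norm (f y)) \<partial>lborel) \<le> (\<integral>\<^sup>+ y. (\<Sum>k. ennreal (M k) * indicator (A k) y) \<partial>lborel)"
    by (rule nn_integral_mono) (rule pw)
  also have "\<dots> = (\<Sum>k. \<integral>\<^sup>+ y. ennreal (M k) * indicator (A k) y \<partial>lborel)"
    by (rule nn_integral_suminf) (use Am in auto)
  also have "\<dots> = (\<Sum>k. ennreal (M k * measure lborel (A k)))"
  proof (rule suminf_cong)
    fix k
    have "(\<integral>\<^sup>+ y. ennreal (M k) * indicator (A k) y \<partial>lborel) = ennreal (M k) * emeasure lborel (A k)"
      using Am by (simp add: nn_integral_cmult_indicator)
    also have "\<dots> = ennreal (M k * measure lborel (A k))"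
      using Afin[of k] M0[of k] by (simp add: emeasure_eq_ennreal_measure ennreal_mult less_top)
    finally show "(\<integral>\<^sup>+ y. ennreal (M k) * indicator (A k) y \<partial>lborel) = ennreal (M k * measure lborel (A k))" .
  qed
  also have "\<dots> = ennreal (\<Sum>k. M k * measure lborel (A k))"
    by (rule suminf_ennreal2) (use M0 sm in auto)
  also have "\<dots> < \<infinity>" by simp
  finally show "(\<integral>\<^sup>+ y. ennreal (norm (f y)) \<partial>lborel) < \<infinity>" .
qed


lemma cball_fmeas: "cball (c::'a::euclidean_space) r \<in> fmeasurable lborel"
  using emeasure_lborel_cball_finite[of c r] by (simp add: fmeasurable_def)

lemma measure_cball_le:
  fixes c :: "'a::euclidean_space"
  assumes "A \<subseteq> cball c r" "A \<in> sets lborel" "0 \<le> r"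
  shows "measure lborel A \<le> unit_ball_vol (real DIM('a)) * r ^ DIM('a)"
  using measure_mono_fmeasurable[OF assms(1,2) cball_fmeas] content_cball[OF assms(3), of c] by simp

lemma exists_shell_in:
  fixes d r :: real
  assumes "0 < d" "d < r"
  shows "\<exists>k. r / 2 ^ Suc k < d \<and> d \<le> r / 2 ^ k"
proof -
  obtain n where n: "r / d < 2 ^ n" using real_arch_pow[of 2 "r/d"] by auto
  then have "r / 2 ^ n < d" using assms by (simp add: field_simps)
  have ex: "\<exists>n. r / 2 ^ Suc n < d"
  proof
    define q where "q = r / 2^n"
    have "r / 2 ^ Suc n = q / 2" unfolding q_def by simp
    moreover have "q > 0" "q < d" unfolding q_def using assms \<open>r / 2 ^ n < d\<close> by auto
    ultimately show "r / 2 ^ Suc n < d" by linarith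
  qed
  define k where "k = (LEAST n. r / 2 ^ Suc n < d)"
  have k1: "r / 2 ^ Suc k < d" unfolding k_def by (rule LeastI_ex[OF ex])
  have k2: "d \<le> r / 2 ^ k"
  proof (cases k)
    case 0 then show ?thesis using assms by simp
  next
    case (Suc j)
    have "\<not> r / 2 ^ Suc j < d"
      using not_less_Least[of j "\<lambda>n. r / 2 ^ Suc n < d"] Suc unfolding k_def by simp
    then show ?thesis using Suc by simp
  qed
  show ?thesis using k1 k2 by blast
qed


lemma pow2_powr: "((2::real)^k) powr b = (2 powr b)^k"
proof -
  have "((2::real)^k) powr b = (2 powr real k) powr b" by (simp add: powr_realpow)
  also have "\<dots> = (2 powr b) powr real k" by (simp add: powr_powr mult.commute)
  also have "\<dots> = (2 powr b)^k" by (simp add: powr_realpow)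
  finally show ?thesis .
qed

lemma inner_pow_integrable:
  fixes c :: "'a::euclidean_space" and r \<beta> :: real
  assumes r: "0 < r" and b: "0 \<le> \<beta>" "\<beta> < DIM('a)"
  shows "integrable lborel (\<lambda>y. indicator (ball c r) y * dist y c powr (-\<beta>))"
proof (rule shell_integrable[where A="\<lambda>k. cball c (r/2^k) - cball c (r/2^Suc k)" and M="\<lambda>k. (r/2^Suc k) powr (-\<beta>)"])
  show "(\<lambda>y. indicator (ball c r) y * dist y c powr (-\<beta>)) \<in> borel_measurable lborel"
    by (intro borel_measurable_times borel_measurable_indicator powr_real_measurable borel_measurable_dist) auto
  fix y show "0 \<le> indicator (ball c r) y * dist y c powr (-\<beta>)" by simp
next
  fix k show "cball c (r/2^k) - cball c (r/2^Suc k) \<in> sets lborel" by auto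
next
  fix k
  have "emeasure lborel (cball c (r/2^k) - cball c (r/2^Suc k)) \<le> emeasure lborel (cball c (r/2^k))"
    by (rule emeasure_mono) auto
  then show "emeasure lborel (cball c (r/2^k) - cball c (r/2^Suc k)) < \<infinity>"
    using emeasure_lborel_cball_finite[of c "r/2^k"] by (simp add: le_less_trans)
next
  fix y assume "indicator (ball c r) y * dist y c powr (-\<beta>) \<noteq> 0"
  then have "dist y c < r" "0 < dist y c" by (auto simp: indicator_def dist_commute split: if_splits)
  then obtain k where "r / 2 ^ Suc k < dist y c" "dist y c \<le> r / 2 ^ k"
    using exists_shell_in by blast
  then show "\<exists>k. y \<in> cball c (r/2^k) - cball c (r/2^Suc k)"
    by (auto simp: dist_commute)
next
  fix k y assume y: "y \<in> cball c (r/2^k) - cball c (r/2^Suc k)"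
  then have d: "r/2^Suc k < dist y c" by (auto simp: dist_commute)
  have "indicator (ball c r) y * dist y c powr (-\<beta>) \<le> dist y c powr (-\<beta>)"
    by (simp add: indicator_def)
  also have "\<dots> \<le> (r/2^Suc k) powr (-\<beta>)"
    using powr_mono2'[of "-\<beta>" "r/2^Suc k" "dist y c"] d r b by auto
  finally show "indicator (ball c r) y * dist y c powr (-\<beta>) \<le> (r/2^Suc k) powr (-\<beta>)" .
next
  fix k show "0 \<le> (r/2^Suc k) powr (-\<beta>)" by simp
next
  define V where "V = unit_ball_vol (real DIM('a))"
  define D where "D = DIM('a)"
  define q where "q = 2 powr \<beta> / 2^D"
  have q0: "0 \<le> q" unfolding q_def by simp
  have q1: "q < 1"
  proof -
    have "(2::real) powr \<beta> < 2 powr (real D)" using b unfolding D_def by (intro powr_less_mono) auto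
    then show ?thesis unfolding q_def by (simp add: powr_realpow)
  qed
  have T: "(r/2^Suc k) powr (-\<beta>) * measure lborel (cball c (r/2^k) - cball c (r/2^Suc k))
        \<le> (V * (r/2) powr (-\<beta>) * r^D) * q^k" for k
  proof -
    have m: "measure lborel (cball c (r/2^k) - cball c (r/2^Suc k)) \<le> V * (r/2^k)^D"
      unfolding V_def D_def by (rule measure_cball_le[where c=c]) (use r in auto)
    have e1: "(r/2^Suc k) powr (-\<beta>) = (r/2) powr (-\<beta>) * (2 powr \<beta>)^k"
    proof -
      have "r/2^Suc k = (r/2) / 2^k" by simp
      then have "(r/2^Suc k) powr (-\<beta>) = ((r/2) / 2^k) powr (-\<beta>)" by (rule arg_cong)
      also have "\<dots> = (r/2) powr (-\<beta>) / (2^k) powr (-\<beta>)" by (rule powr_divide)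
      also have "\<dots> = (r/2) powr (-\<beta>) * (2^k) powr \<beta>" by (metis divide_inverse inverse_inverse_eq powr_minus)
      finally show ?thesis by (simp add: pow2_powr)
    qed
    have e2: "(r/2^k)^D = r^D / (2^D)^k" by (simp add: power_divide power_mult[symmetric] mult.commute)
    have "(r/2^Suc k) powr (-\<beta>) * measure lborel (cball c (r/2^k) - cball c (r/2^Suc k))
        \<le> (r/2^Suc k) powr (-\<beta>) * (V * (r/2^k)^D)"
      by (rule mult_left_mono[OF m]) simp
    also have "\<dots> = (V * (r/2) powr (-\<beta>) * r^D) * q^k"
      unfolding e1 e2 q_def by (simp add: power_divide)
    finally show ?thesis .
  qed
  show "summable (\<lambda>k. (r/2^Suc k) powr (-\<beta>) * measure lborel (cball c (r/2^k) - cball c (r/2^Suc k)))"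
  proof (rule summable_comparison_test[where g="\<lambda>k. (V * (r/2) powr (-\<beta>) * r^D) * q^k"])
    show "\<exists>N. \<forall>n\<ge>N. norm ((r/2^Suc n) powr (-\<beta>) * measure lborel (cball c (r/2^n) - cball c (r/2^Suc n)))
        \<le> (V * (r/2) powr (-\<beta>) * r^D) * q^n"
      using T by (auto simp: abs_of_nonneg)
    show "summable (\<lambda>k. (V * (r/2) powr (-\<beta>) * r^D) * q^k)"
      using q0 q1 by (intro summable_mult summable_geometric) auto
  qed
qed


lemma exists_shell_out:
  fixes d r :: real
  assumes "0 < r" "r \<le> d"
  shows "\<exists>k. r * 2 ^ k \<le> d \<and> d < r * 2 ^ Suc k"
proof -
  obtain n where n: "d / r < 2 ^ n" using real_arch_pow[of 2 "d/r"] by auto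
  then have "d < r * 2 ^ n" using assms by (simp add: field_simps)
  have ex: "\<exists>n. d < r * 2 ^ Suc n"
  proof
    have "r * 2 ^ n \<le> r * 2 ^ Suc n" using assms by simp
    then show "d < r * 2 ^ Suc n" using \<open>d < r * 2 ^ n\<close> by linarith
  qed
  define k where "k = (LEAST n. d < r * 2 ^ Suc n)"
  have k1: "d < r * 2 ^ Suc k" unfolding k_def by (rule LeastI_ex[OF ex])
  have k2: "r * 2 ^ k \<le> d"
  proof (cases k)
    case 0 then show ?thesis using assms by simp
  next
    case (Suc j)
    have "\<not> d < r * 2 ^ Suc j"
      using not_less_Least[of j "\<lambda>n. d < r * 2 ^ Suc n"] Suc unfolding k_def by simp
    then show ?thesis using Suc by simp
  qed
  show ?thesis using k1 k2 by blast
qed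

lemma outer_pow_integrable:
  fixes c :: "'a::euclidean_space" and r \<beta> :: real
  assumes r: "0 < r" and b: "DIM('a) < \<beta>"
  shows "integrable lborel (\<lambda>y. indicator (- ball c r) y * dist y c powr (-\<beta>))"
proof (rule shell_integrable[where A="\<lambda>k. ball c (r*2^Suc k) - ball c (r*2^k)" and M="\<lambda>k. (r*2^k) powr (-\<beta>)"])
  show "(\<lambda>y. indicator (- ball c r) y * dist y c powr (-\<beta>)) \<in> borel_measurable lborel"
    by (intro borel_measurable_times borel_measurable_indicator powr_real_measurable borel_measurable_dist) auto
  fix y show "0 \<le> indicator (- ball c r) y * dist y c powr (-\<beta>)" by simp
next
  fix k show "ball c (r*2^Suc k) - ball c (r*2^k) \<in> sets lborel" by auto
next
  fix k
  have "emeasure lborel (ball c (r*2^Suc k) - ball c (r*2^k)) \<le> emeasure lborel (cball c (r*2^Suc k))"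
    by (rule emeasure_mono) auto
  then show "emeasure lborel (ball c (r*2^Suc k) - ball c (r*2^k)) < \<infinity>"
    using emeasure_lborel_cball_finite[of c "r*2^Suc k"] by (simp add: le_less_trans)
next
  fix y assume "indicator (- ball c r) y * dist y c powr (-\<beta>) \<noteq> 0"
  then have "r \<le> dist y c" by (auto simp: indicator_def dist_commute split: if_splits)
  then obtain k where "r * 2 ^ k \<le> dist y c" "dist y c < r * 2 ^ Suc k"
    using exists_shell_out r by blast
  then show "\<exists>k. y \<in> ball c (r*2^Suc k) - ball c (r*2^k)"
    by (auto simp: dist_commute)
next
  fix k y assume y: "y \<in> ball c (r*2^Suc k) - ball c (r*2^k)"
  then have d: "r*2^k \<le> dist y c" by (auto simp: dist_commute)
  have "indicator (- ball c r) y * dist y c powr (-\<beta>) \<le> dist y c powr (-\<beta>)"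
    by (simp add: indicator_def)
  also have "\<dots> \<le> (r*2^k) powr (-\<beta>)"
    using powr_mono2'[of "-\<beta>" "r*2^k" "dist y c"] d r b by auto
  finally show "indicator (- ball c r) y * dist y c powr (-\<beta>) \<le> (r*2^k) powr (-\<beta>)" .
next
  fix k show "0 \<le> (r*2^k) powr (-\<beta>)" by simp
next
  define V where "V = unit_ball_vol (real DIM('a))"
  define D where "D = DIM('a)"
  define q where "q = 2^D / 2 powr \<beta>"
  have q0: "0 \<le> q" unfolding q_def by simp
  have q1: "q < 1"
  proof -
    have "(2::real) powr (real D) < 2 powr \<beta>" using b unfolding D_def by (intro powr_less_mono) auto
    then show ?thesis unfolding q_def by (simp add: powr_realpow)
  qed
  have T: "(r*2^k) powr (-\<beta>) * measure lborel (ball c (r*2^Suc k) - ball c (r*2^k))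
        \<le> (V * r powr (-\<beta>) * (2*r)^D) * q^k" for k
  proof -
    have m: "measure lborel (ball c (r*2^Suc k) - ball c (r*2^k)) \<le> V * (r*2^Suc k)^D"
      unfolding V_def D_def by (rule measure_cball_le[where c=c]) (use r in auto)
    have e1: "(r*2^k) powr (-\<beta>) = r powr (-\<beta>) / (2 powr \<beta>)^k"
    proof -
      have "(r*2^k) powr (-\<beta>) = r powr (-\<beta>) * (2^k) powr (-\<beta>)" using r by (simp add: powr_mult)
      also have "\<dots> = r powr (-\<beta>) / (2^k) powr \<beta>" by (metis divide_inverse powr_minus)
      finally show ?thesis by (simp add: pow2_powr)
    qed
    have e2: "(r*2^Suc k)^D = (2*r)^D * (2^D)^k" by (simp add: power_mult_distrib power_mult[symmetric] mult.commute)
    have "(r*2^k) powr (-\<beta>) * measure lborel (ball c (r*2^Suc k) - ball c (r*2^k))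
        \<le> (r*2^k) powr (-\<beta>) * (V * (r*2^Suc k)^D)"
      by (rule mult_left_mono[OF m]) simp
    also have "\<dots> = (V * r powr (-\<beta>) * (2*r)^D) * q^k"
      unfolding e1 e2 q_def by (simp add: power_divide)
    finally show ?thesis .
  qed
  show "summable (\<lambda>k. (r*2^k) powr (-\<beta>) * measure lborel (ball c (r*2^Suc k) - ball c (r*2^k)))"
  proof (rule summable_comparison_test[where g="\<lambda>k. (V * r powr (-\<beta>) * (2*r)^D) * q^k"])
    show "\<exists>N. \<forall>n\<ge>N. norm ((r*2^n) powr (-\<beta>) * measure lborel (ball c (r*2^Suc n) - ball c (r*2^n)))
        \<le> (V * r powr (-\<beta>) * (2*r)^D) * q^n"
      using T by (auto simp: abs_of_nonneg)
    show "summable (\<lambda>k. (V * r powr (-\<beta>) * (2*r)^D) * q^k)"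
      using q0 q1 by (intro summable_mult summable_geometric) auto
  qed
qed

lemma one_minus_cos_le: "1 - cos (t::real) \<le> t\<^sup>2 / 2"
proof -
  have "cos t = cos (2 * (t/2))" by simp
  also have "\<dots> = 1 - 2 * sin (t/2) ^ 2" by (rule cos_double_sin)
  finally have "1 - cos t = 2 * (sin (t/2))\<^sup>2" by simp
  also have "\<dots> \<le> 2 * (t/2)\<^sup>2"
  proof -
    have "\<bar>sin (t/2)\<bar> \<le> \<bar>t/2\<bar>" by (rule abs_sin_x_le_abs_x)
    then have "(sin (t/2))\<^sup>2 \<le> (t/2)\<^sup>2" by (metis abs_le_square_iff)
    then show ?thesis by simp
  qed
  also have "\<dots> = t\<^sup>2 / 2" by (simp add: power2_eq_square)
  finally show ?thesis .
qed

lemma cfrac_integrable: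
  fixes k :: "'n::finite" and \<alpha> :: real
  assumes a: "0 < \<alpha>" "\<alpha> < 1" and N2: "CARD('n) \<ge> 2"
  shows "integrable lborel (\<lambda>z::real^'n. (1 - cos (z $ k)) / norm z powr (real CARD('n) + 2 * \<alpha>))"
proof (rule Bochner_Integration.integrable_bound)
  define p where "p = real CARD('n) + 2 * \<alpha>"
  show "integrable lborel (\<lambda>z::real^'n. 1/2 * (indicator (ball 0 1) z * dist z 0 powr (-(p-2)))
       + 2 * (indicator (- ball 0 1) z * dist z 0 powr (-p)))"
  proof (intro Bochner_Integration.integrable_add integrable_mult_right)
    show "integrable lborel (\<lambda>z::real^'n. indicator (ball 0 1) z * dist z 0 powr (-(p-2)))"
      by (rule inner_pow_integrable) (use a N2 in \<open>auto simp: p_def\<close>)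
    show "integrable lborel (\<lambda>z::real^'n. indicator (- ball 0 1) z * dist z 0 powr (-p))"
      by (rule outer_pow_integrable) (use a N2 in \<open>auto simp: p_def\<close>)
  qed
  show "(\<lambda>z::real^'n. (1 - cos (z $ k)) / norm z powr (real CARD('n) + 2 * \<alpha>)) \<in> borel_measurable lborel"
    by measurable
  show "AE z in lborel. norm ((1 - cos (z $ k)) / norm z powr (real CARD('n) + 2 * \<alpha>))
      \<le> norm (1/2 * (indicator (ball 0 1) z * dist z 0 powr (-(p-2)))
       + 2 * (indicator (- ball 0 1) z * dist z 0 powr (-p)))"
  proof (rule AE_I2)
    fix z :: "real^'n"
    have c0: "0 \<le> 1 - cos (z $ k)" by simp
    show "norm ((1 - cos (z $ k)) / norm z powr (real CARD('n) + 2 * \<alpha>))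
      \<le> norm (1/2 * (indicator (ball 0 1) z * dist z 0 powr (-(p-2)))
       + 2 * (indicator (- ball 0 1) z * dist z 0 powr (-p)))"
    proof (cases "z = 0")
      case True then show ?thesis by simp
    next
      case False
      then have nz: "norm z > 0" by simp
      have pe: "real CARD('n) + 2 * \<alpha> = p" by (simp add: p_def)
      have lhs: "norm ((1 - cos (z $ k)) / norm z powr (real CARD('n) + 2 * \<alpha>)) = (1 - cos (z $ k)) * norm z powr (-p)"
        unfolding pe
      proof -
        have "norm ((1 - cos (z$k)) / norm z powr p) = (1 - cos (z$k)) / norm z powr p" using c0 by simp
        also have "\<dots> = (1 - cos (z$k)) * inverse (norm z powr p)" by (rule divide_inverse)
        also have "\<dots> = (1 - cos (z$k)) * norm z powr (-p)" by (simp only: powr_minus)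
        finally show "norm ((1 - cos (z$k)) / norm z powr p) = (1 - cos (z$k)) * norm z powr (-p)" .
      qed
      show ?thesis
      proof (cases "norm z < 1")
        case True
        have "(1 - cos (z $ k)) \<le> (norm z)\<^sup>2 / 2"
        proof -
          have "(z $ k)\<^sup>2 \<le> (norm z)\<^sup>2" using component_le_norm_cart[of z k] by (metis abs_le_square_iff abs_norm_cancel)
          then show ?thesis using one_minus_cos_le[of "z $ k"] by linarith
        qed
        then have "(1 - cos (z $ k)) * norm z powr (-p) \<le> (norm z)\<^sup>2 / 2 * norm z powr (-p)"
          by (rule mult_right_mono) simp
        also have "\<dots> = 1/2 * norm z powr (-(p-2))"
        proof -
          have e: "(norm z)\<^sup>2 = norm z powr 2" using powr_realpow[of "norm z" 2] nz by simp
          have "norm z powr 2 * norm z powr (-p) = norm z powr (-(p-2))"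
            by (subst powr_add[symmetric]) simp
          then have "(norm z)\<^sup>2 * norm z powr (-p) = norm z powr (-(p-2))" unfolding e .
          then show ?thesis by simp
        qed
        finally show ?thesis using True lhs by (simp add: indicator_def dist_norm)
      next
        case False
        have "(1 - cos (z $ k)) * norm z powr (-p) \<le> 2 * norm z powr (-p)"
          using cos_ge_minus_one[of "z $ k"] by (intro mult_right_mono) auto
        then show ?thesis using False lhs by (simp add: indicator_def dist_norm)
      qed
    qed
  qed
qed

lemma cfrac_pos:
  fixes k :: "'n::finite" and \<alpha> :: real
  assumes a: "0 < \<alpha>" "\<alpha> < 1" and N2: "CARD('n) \<ge> 2"
  shows "c_frac k \<alpha> > 0"
proof -
  define p where "p = real CARD('n) + 2 * \<alpha>"
  define f where "f = (\<lambda>z::real^'n. (1 - cos (z $ k)) / norm z powr p)"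
  define m0 where "m0 = (1 - cos (1/2)) / (3/2) powr p"
  define B where "B = ball (axis k 1 :: real^'n) (1/2)"
  have int: "integrable lborel f" unfolding f_def p_def by (rule cfrac_integrable[OF a N2])
  have cos1: "cos (1/2::real) < 1" using cos_monotone_0_pi[of 0 "1/2"] pi_gt3 by simp
  have m0: "m0 > 0" unfolding m0_def using cos1 by simp
  have Bfin: "emeasure lborel B < \<infinity>" unfolding B_def using emeasure_lborel_ball_finite by blast
  have "0 < m0 * measure lborel B" using m0 content_ball_pos[of "1/2" "axis k 1"] unfolding B_def by simp
  also have "m0 * measure lborel B = (LINT z|lborel. m0 * indicator B z)"
    using Bfin unfolding B_def by simp
  also have "\<dots> \<le> (LINT z|lborel. f z)"
  proof (rule integral_mono[OF _ int])
    show "integrable lborel (\<lambda>z. m0 * indicator B z)"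
      using Bfin unfolding B_def by simp
    fix z :: "real^'n"
    show "m0 * indicator B z \<le> f z"
    proof (cases "z \<in> B")
      case False
      then show ?thesis unfolding f_def by (simp add: divide_nonneg_pos)
    next
      case True
      then have d: "norm (z - axis k 1) < 1/2" unfolding B_def by (simp add: dist_norm norm_minus_commute)
      have zk: "\<bar>z $ k - 1\<bar> < 1/2" using component_le_norm_cart[of "z - axis k 1" k] d by simp
      have nz1: "norm z < 3/2" using norm_triangle_lt[of "z - axis k 1" "axis k 1" "3/2"] d by simp
      have nz0: "norm z > 1/2" using component_le_norm_cart[of z k] zk by linarith
      have cz: "cos (z $ k) \<le> cos (1/2)"
      proof (rule cos_monotone_0_pi_le)
        show "0 \<le> (1/2::real)" by simp
        show "1/2 \<le> z $ k" using zk by linarith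
        show "z $ k \<le> pi" using zk pi_gt3 by linarith
      qed
      have "m0 \<le> (1 - cos (z $ k)) / (3/2) powr p"
        unfolding m0_def using cz by (intro divide_right_mono) auto
      also have "\<dots> \<le> (1 - cos (z $ k)) / norm z powr p"
        using nz0 nz1 cz cos1 a unfolding p_def
        by (intro divide_left_mono powr_mono2 mult_pos_pos) auto
      finally show ?thesis using True unfolding f_def by simp
    qed
  qed
  finally have "0 < (LINT z|lborel. f z)" .
  then show ?thesis unfolding c_frac_def f_def p_def by simp
qed

lemma Fint_eq:
  fixes R :: real assumes "0 \<le> R"
  shows "(LBINT t=0..ereal R. f t) = (LINT t:{0<..<R}|lborel. f t)"
  using interval_integral_Ioo[of 0 "ereal R" f] assms by (simp add: zero_ereal_def)

lemma kappa_pos: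
  assumes "0 < N" "0 < (\<alpha>::real)" shows "kappa_green N \<alpha> > 0"
proof -
  have "Gamma \<alpha> > 0" using assms by simp
  moreover have "Gamma (real N / 2) > 0" using assms by simp
  ultimately show ?thesis unfolding kappa_green_def by (intro divide_pos_pos mult_pos_pos) auto
qed

definition "gg a m t = t powr (a-1) * (t+1) powr (- m / 2)"
definition "Phi a m r = (LINT t:{0<..<max 0 r}|lborel. gg a m t)"
definition "CC a m = (LINT t:{0<..}|lborel. gg a m t)"

context
  fixes \<alpha> :: real and e x :: "real^'n::finite"
  assumes a: "0 < \<alpha>" "\<alpha> < 1" and N2: "CARD('n) \<ge> 2" and x: "x \<in> ball e 1"
begin

lemma N2r: "real CARD('n) \<ge> 2" using N2 by simp

lemma Phi_mono: "mono (Phi \<alpha> (real CARD('n)))"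
proof (rule monoI)
  fix r1 r2 :: real assume "r1 \<le> r2"
  then show "Phi \<alpha> (real CARD('n)) r1 \<le> Phi \<alpha> (real CARD('n)) r2" unfolding Phi_def gg_def
    by (intro g_sub_mono[OF a N2r]) auto
qed

lemma Phi_meas[measurable]: "Phi \<alpha> (real CARD('n)) \<in> borel_measurable borel"
  by (rule borel_measurable_mono[OF Phi_mono])

lemma Phi_le: "Phi \<alpha> (real CARD('n)) r \<le> CC \<alpha> (real CARD('n))"
  unfolding Phi_def CC_def gg_def by (intro g_sub_mono[OF a N2r]) auto

lemma Phi_nonneg: "0 \<le> Phi \<alpha> (real CARD('n)) r"
  unfolding Phi_def set_lebesgue_integral_def
  by (intro Bochner_Integration.integral_nonneg) (auto simp: indicator_def gg_def)

lemma green_eq: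
  "green_ball \<alpha> e x y = (if y \<in> ball e 1 \<and> x \<noteq> y then
      kappa_green CARD('n) \<alpha> * dist x y powr (2 * \<alpha> - real CARD('n)) *
      Phi \<alpha> (real CARD('n)) ((1 - (dist x e)\<^sup>2) * (1 - (dist y e)\<^sup>2) / (dist x y)\<^sup>2) else 0)"
proof (cases "y \<in> ball e 1 \<and> x \<noteq> y")
  case True
  define R where "R = (1 - (dist x e)\<^sup>2) * (1 - (dist y e)\<^sup>2) / (dist x y)\<^sup>2"
  have "dist x e < 1" "dist y e < 1" using x True by (auto simp: dist_commute)
  then have "(dist x e)\<^sup>2 < 1" "(dist y e)\<^sup>2 < 1"
    by (simp_all add: abs_square_less_1)
  then have R0: "R \<ge> 0" unfolding R_def by simp
  have "(LBINT t=0..ereal R. t powr (\<alpha> - 1) * (t + 1) powr (- real CARD('n) / 2)) = Phi \<alpha> (real CARD('n)) R"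
    unfolding Phi_def gg_def using R0 by (simp add: Fint_eq max_def)
  then show ?thesis using True x unfolding green_ball_def R_def by simp
qed (use x in \<open>auto simp: green_ball_def\<close>)

lemma green_meas[measurable]: "(\<lambda>y. green_ball \<alpha> e x y) \<in> borel_measurable lborel"
proof -
  have [measurable]: "Measurable.pred lborel (\<lambda>y. y \<in> ball e 1)"
    unfolding pred_def by auto
  have [measurable]: "Measurable.pred lborel (\<lambda>y. x \<noteq> y)"
  proof -
    have "{y. x \<noteq> y} = - {x}" by auto
    then show ?thesis unfolding pred_def by auto
  qed
  show ?thesis unfolding green_eq by measurable
qed

lemma CC_nonneg: "0 \<le> CC \<alpha> (real CARD('n))"
  using Phi_nonneg[of 0] Phi_le[of 0] by linarith

lemma green_nonneg: "0 \<le> green_ball \<alpha> e x y"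
  unfolding green_eq using kappa_pos[of "CARD('n)" \<alpha>] a Phi_nonneg by auto

lemma green_upper:
  "green_ball \<alpha> e x y \<le> kappa_green CARD('n) \<alpha> * CC \<alpha> (real CARD('n)) * dist y x powr (-(real CARD('n) - 2 * \<alpha>))"
proof -
  have k: "kappa_green CARD('n) \<alpha> > 0" using kappa_pos[of "CARD('n)" \<alpha>] a by simp
  have e: "-(real CARD('n) - 2 * \<alpha>) = 2 * \<alpha> - real CARD('n)" by simp
  show ?thesis
  proof (cases "y \<in> ball e 1 \<and> x \<noteq> y")
    case True
    have "kappa_green CARD('n) \<alpha> * dist x y powr (2 * \<alpha> - real CARD('n)) *
      Phi \<alpha> (real CARD('n)) ((1 - (dist x e)\<^sup>2) * (1 - (dist y e)\<^sup>2) / (dist x y)\<^sup>2)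
      \<le> kappa_green CARD('n) \<alpha> * dist x y powr (2 * \<alpha> - real CARD('n)) * CC \<alpha> (real CARD('n))"
      using k by (intro mult_left_mono Phi_le) auto
    then show ?thesis using True unfolding green_eq e by (simp add: dist_commute mult_ac)
  next
    case False
    then show ?thesis unfolding green_eq using k CC_nonneg by auto
  qed
qed

lemma green_lower:
  assumes y: "y \<in> ball e 1" "y \<noteq> x"
  shows "green_ball \<alpha> e x y \<ge> kappa_green CARD('n) \<alpha> * 2 powr (2 * \<alpha> - real CARD('n)) *
     (2 powr (- real CARD('n) / 2) * (((1 - (dist x e)\<^sup>2) * (1 - (dist y e)\<^sup>2) / 4) powr \<alpha> / \<alpha>))"
proof -
  define P where "P = 1 - (dist x e)\<^sup>2"
  define q where "q = 1 - (dist y e)\<^sup>2"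
  define d where "d = dist x y"
  have k: "kappa_green CARD('n) \<alpha> > 0" using kappa_pos[of "CARD('n)" \<alpha>] a by simp
  have dx: "dist x e < 1" "dist y e < 1" using x y by (auto simp: dist_commute)
  then have "(dist x e)\<^sup>2 < 1" "(dist y e)\<^sup>2 < 1" by (simp_all add: abs_square_less_1)
  then have P: "0 < P" "P \<le> 1" and q: "0 < q" "q \<le> 1" unfolding P_def q_def by auto
  have d0: "0 < d" unfolding d_def using y by simp
  have d2: "d < 2" unfolding d_def using dist_triangle[of x y e] dx by (simp add: dist_commute)
  have Pq: "0 < P * q" "P * q \<le> 1" using P q by (auto simp: mult_le_one)
  have R: "P * q / 4 \<le> P * q / d\<^sup>2"
  proof (rule divide_left_mono)
    have "d\<^sup>2 \<le> 2\<^sup>2" using d0 d2 by (intro power_mono) auto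
    then show "d\<^sup>2 \<le> 4" by simp
  qed (use Pq d0 in auto)
  have "2 powr (- real CARD('n) / 2) * ((P * q / 4) powr \<alpha> / \<alpha>) \<le> Phi \<alpha> (real CARD('n)) (P * q / 4)"
  proof -
    have "2 powr (- real CARD('n) / 2) * ((P * q / 4) powr \<alpha> / \<alpha>)
       \<le> (LINT t:{0<..<P * q / 4}|lborel. t powr (\<alpha>-1) * (t+1) powr (- real CARD('n) / 2))"
      using Pq by (intro g_lower[OF a N2r]) auto
    also have "\<dots> = Phi \<alpha> (real CARD('n)) (P * q / 4)"
      unfolding Phi_def gg_def using Pq by (simp add: max_def)
    finally show ?thesis .
  qed
  also have "\<dots> \<le> Phi \<alpha> (real CARD('n)) (P * q / d\<^sup>2)"
    using Phi_mono R by (simp add: mono_def)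
  finally have Phi_low: "2 powr (- real CARD('n) / 2) * ((P * q / 4) powr \<alpha> / \<alpha>) \<le> Phi \<alpha> (real CARD('n)) (P * q / d\<^sup>2)" .
  have dpow: "2 powr (2 * \<alpha> - real CARD('n)) \<le> d powr (2 * \<alpha> - real CARD('n))"
    using powr_mono2'[of "2 * \<alpha> - real CARD('n)" d 2] d0 d2 a N2r by auto
  have "kappa_green CARD('n) \<alpha> * 2 powr (2 * \<alpha> - real CARD('n)) *
     (2 powr (- real CARD('n) / 2) * ((P * q / 4) powr \<alpha> / \<alpha>))
     \<le> kappa_green CARD('n) \<alpha> * d powr (2 * \<alpha> - real CARD('n)) * Phi \<alpha> (real CARD('n)) (P * q / d\<^sup>2)"
  proof (rule mult_mono)
    show "kappa_green CARD('n) \<alpha> * 2 powr (2 * \<alpha> - real CARD('n)) \<le> kappa_green CARD('n) \<alpha> * d powr (2 * \<alpha> - real CARD('n))"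
      using k dpow by simp
    show "0 \<le> kappa_green CARD('n) \<alpha> * d powr (2 * \<alpha> - real CARD('n))" using k by simp
    show "0 \<le> 2 powr (- real CARD('n) / 2) * ((P * q / 4) powr \<alpha> / \<alpha>)" using a by simp
  qed (rule Phi_low)
  also have "\<dots> = green_ball \<alpha> e x y"
    unfolding green_eq P_def q_def d_def using y by simp
  finally show ?thesis unfolding P_def q_def .
qed

end

lemma comp_pos_ball:
  fixes y :: "real^'n::finite"
  assumes "y \<in> ball (axis k 1) 1" "0 \<le> s"
  shows "y $ k > 0" "norm (y + s *\<^sub>R axis k 1) \<ge> s + y $ k"
proof -
  have "\<bar>(y - axis k 1) $ k\<bar> \<le> norm (y - axis k 1)" by (rule component_le_norm_cart)
  moreover have "norm (y - axis k 1) < 1" using assms by (simp add: dist_norm norm_minus_commute)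
  ultimately show yk: "y $ k > 0" by simp
  have "\<bar>(y + s *\<^sub>R axis k 1) $ k\<bar> \<le> norm (y + s *\<^sub>R axis k 1)" by (rule component_le_norm_cart)
  then show "norm (y + s *\<^sub>R axis k 1) \<ge> s + y $ k" using yk assms by simp
qed

lemma pow_alg:
  fixes s a :: real and n :: nat
  assumes s: "s > 0"
  shows "(s/2)^n * (s powr a / ((5/2) * s) powr (real n + 2 * a)) = s powr (-a) / 2^n / (5/2) powr (real n + 2 * a)"
proof -
  have e1: "(s/2)^n = s powr (real n) / 2^n" using s by (simp add: power_divide powr_realpow)
  have e2: "((5/2) * s) powr (real n + 2 * a) = (5/2) powr (real n + 2 * a) * s powr (real n + 2 * a)"
    using s by (intro powr_mult)
  have e3: "s powr (real n) * s powr a = s powr (-a) * s powr (real n + 2 * a)"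
    by (simp add: powr_add[symmetric] add.commute)
  have "(s/2)^n * (s powr a / ((5/2) * s) powr (real n + 2 * a))
      = (s powr (real n) * s powr a) / (2^n * ((5/2) powr (real n + 2 * a) * s powr (real n + 2 * a)))"
    unfolding e1 e2 by simp
  also have "\<dots> = (s powr (-a) * s powr (real n + 2 * a)) / (2^n * (5/2) powr (real n + 2 * a) * s powr (real n + 2 * a))"
    unfolding e3 by (simp add: mult_ac)
  also have "\<dots> = s powr (-a) / 2^n / (5/2) powr (real n + 2 * a)"
    using s by (simp add: field_simps)
  finally show ?thesis .
qed

theorem lemma3p2:
  fixes \<alpha> :: real and k :: "'n::finite" and x :: "real^'n"
  assumes "CARD('n) \<ge> 2" and "0 < \<alpha>" and "\<alpha> < 1"
    and "x \<in> ball (axis k 1) 1"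
  shows "filterlim
           (\<lambda>s. LINT y:ball (axis k 1) 1|lborel.
                  green_ball \<alpha> (axis k 1) x y *
                  (c_frac k \<alpha> / norm (y + s *\<^sub>R axis k 1) powr (real CARD('n) + 2 * \<alpha>)))
           at_top (at_right 0)"
proof -
  note N2 = assms(1) and a1 = assms(2) and a2 = assms(3) and x = assms(4)
  define e :: "real^'n" where "e = axis k 1"
  define N where "N = real CARD('n)"
  define p where "p = N + 2 * \<alpha>"
  define c where "c = c_frac k \<alpha>"
  define B where "B = ball e 1"
  define f where "f = (\<lambda>s y. green_ball \<alpha> e x y * (c / norm (y + s *\<^sub>R e) powr p))"
  have xe: "x \<in> ball e 1" using x unfolding e_def .
  have c0: "c > 0" unfolding c_def by (rule cfrac_pos[OF a1 a2 N2])
  have N2r: "N \<ge> 2" unfolding N_def using N2 by simp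
  have p0: "p > 0" unfolding p_def using N2r a1 by simp
  note Gm = green_meas[OF a1 a2 N2 xe]
  note Gn = green_nonneg[OF a1 a2 N2 xe]
  note Gu = green_upper[OF a1 a2 N2 xe]
  note Gl = green_lower[OF a1 a2 N2 xe]
  define kap where "kap = kappa_green CARD('n) \<alpha>"
  have kap: "kap > 0" unfolding kap_def using kappa_pos[of "CARD('n)" \<alpha>] a1 by simp
  define CCn where "CCn = CC \<alpha> (real CARD('n))"
  have CCn: "CCn \<ge> 0" unfolding CCn_def by (rule CC_nonneg[OF a1 a2 N2 xe])
  have f0: "f s y \<ge> 0" for s y unfolding f_def using Gn c0 by simp

  have integ: "set_integrable lborel B (f s)" if s: "s > 0" for s
  proof (rule set_integrable_bound)
    define K where "K = kap * CCn * (c / s powr p)"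
    show "set_integrable lborel B (\<lambda>y. K * (indicator (ball x 2) y * dist y x powr (-(N - 2 * \<alpha>))))"
      unfolding set_integrable_def
    proof (rule integrable_mult_indicator)
      show "B \<in> sets lborel" unfolding B_def by simp
      have "integrable lborel (\<lambda>y. indicator (ball x 2) y * dist y x powr (-(N - 2 * \<alpha>)))"
        by (rule inner_pow_integrable) (use a1 a2 N2r in \<open>auto simp: N_def\<close>)
      then show "integrable lborel (\<lambda>y. K * (indicator (ball x 2) y * dist y x powr (-(N - 2 * \<alpha>))))"
        by simp
    qed
    show "set_borel_measurable lborel B (f s)"
    proof -
      have [measurable]: "B \<in> sets borel" unfolding B_def by simp
      have [measurable]: "(\<lambda>y. green_ball \<alpha> e x y) \<in> borel_measurable borel" using Gm by simp
      show ?thesis unfolding set_borel_measurable_def f_def by measurable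
    qed
    show "AE y in lborel. y \<in> B \<longrightarrow> norm (f s y) \<le> norm (K * (indicator (ball x 2) y * dist y x powr (-(N - 2 * \<alpha>))))"
    proof (rule AE_I2, rule impI)
      fix y assume y: "y \<in> B"
      have yx: "dist y x < 2" using y xe unfolding B_def
        using dist_triangle[of y x e] by (simp add: dist_commute)
      have ns: "norm (y + s *\<^sub>R e) \<ge> s" using comp_pos_ball[of y k s] y s unfolding B_def e_def by simp
      have k1: "c / norm (y + s *\<^sub>R e) powr p \<le> c / s powr p"
        using ns s c0 p0 by (intro divide_left_mono powr_mono2 mult_pos_pos) auto
      have k0: "0 \<le> c / norm (y + s *\<^sub>R e) powr p" using c0 by simp
      have "norm (f s y) = f s y" using f0 by simp
      also have "\<dots> \<le> (kap * CCn * dist y x powr (-(N - 2 * \<alpha>))) * (c / s powr p)"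
        unfolding f_def using Gu[of y] Gn[of y] k0 k1
        by (intro mult_mono) (auto simp: kap_def CCn_def N_def)
      also have "\<dots> = K * (indicator (ball x 2) y * dist y x powr (-(N - 2 * \<alpha>)))"
        using yx unfolding K_def by (simp add: dist_commute)
      also have "\<dots> \<le> norm (K * (indicator (ball x 2) y * dist y x powr (-(N - 2 * \<alpha>))))" by simp
      finally show "norm (f s y) \<le> norm (K * (indicator (ball x 2) y * dist y x powr (-(N - 2 * \<alpha>))))" .
    qed
  qed
  define P where "P = 1 - (dist x e)\<^sup>2"
  have "dist x e < 1" using xe by (simp add: dist_commute)
  then have "(dist x e)\<^sup>2 < 1" by (simp add: abs_square_less_1)
  then have P: "0 < P" unfolding P_def by simp
  have nx: "norm x > 0"
  proof -
    have "x \<noteq> 0" using xe unfolding e_def by auto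
    then show ?thesis by simp
  qed
  have ne: "norm e = 1" unfolding e_def by simp
  define s0 where "s0 = min 1 (norm x / 2)"
  have s0: "s0 > 0" unfolding s0_def using nx by simp
  define V where "V = unit_ball_vol (real CARD('n))"
  have V: "V > 0" unfolding V_def by simp
  define L where "L = kap * 2 powr (2 * \<alpha> - N) * (2 powr (- N / 2) * ((P/8) powr \<alpha> / \<alpha>))"
  have L: "L > 0" unfolding L_def using kap P a1 by simp
  define Kc where "Kc = V * L * c / 2^CARD('n) / (5/2) powr p"
  have Kc: "Kc > 0" unfolding Kc_def using V L c0 by simp
  have low: "Kc * s powr (-\<alpha>) \<le> (LINT y:B|lborel. f s y)" if s: "0 < s" "s < s0" for s
  proof -
    define S where "S = ball (s *\<^sub>R e) (s/2)"
    define Lc where "Lc = L * s powr \<alpha> * (c / ((5/2) * s) powr p)"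
    have s1: "s \<le> 1" "s \<le> norm x / 2" using s unfolding s0_def by auto
    have SB: "S \<subseteq> B"
    proof
      fix y assume "y \<in> S"
      then have "dist y (s *\<^sub>R e) < s/2" unfolding S_def by (simp add: dist_commute)
      moreover have "dist (s *\<^sub>R e) e = 1 - s"
      proof -
        have "s *\<^sub>R e - e = (s - 1) *\<^sub>R e" by (simp add: algebra_simps)
        then show ?thesis using s1 ne by (simp add: dist_norm)
      qed
      ultimately have "dist y e < 1" using dist_triangle[of y e "s *\<^sub>R e"] s by linarith
      then show "y \<in> B" unfolding B_def by (simp add: dist_commute)
    qed
    have pw: "Lc \<le> f s y" if y: "y \<in> S" for y
    proof -
      have dys: "dist y (s *\<^sub>R e) < s/2" using y unfolding S_def by (simp add: dist_commute)
      have dse: "dist (s *\<^sub>R e) e = 1 - s"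
      proof -
        have "s *\<^sub>R e - e = (s - 1) *\<^sub>R e" by (simp add: algebra_simps)
        then show ?thesis using s1 ne by (simp add: dist_norm)
      qed
      have dye: "dist y e < 1 - s/2" using dist_triangle[of y e "s *\<^sub>R e"] dys dse by linarith
      have yB: "y \<in> ball e 1" using SB y unfolding B_def by auto
      have q: "1 - (dist y e)\<^sup>2 \<ge> s/2"
      proof -
        have "(dist y e)\<^sup>2 \<le> (1 - s/2)\<^sup>2" using dye s1 by (intro power_mono) auto
        moreover have "(1 - s/2)\<^sup>2 = 1 - s + s * s / 4" by (simp add: power2_eq_square algebra_simps)
        moreover have "s * s / 4 \<le> s / 2" using s s1 by (simp add: mult_le_cancel_left1) 
        ultimately show ?thesis by linarith
      qed
      have yx: "y \<noteq> x"
      proof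
        assume "y = x"
        have "norm y \<le> norm (y - s *\<^sub>R e) + norm (s *\<^sub>R e)" using norm_triangle_sub[of y "s *\<^sub>R e"] by linarith
        also have "\<dots> < s/2 + s" using dys s ne by (simp add: dist_norm)
        finally have "norm y < 3/2 * s" by simp
        then show False using \<open>y = x\<close> s1 s by simp
      qed
      have G1: "green_ball \<alpha> e x y \<ge> L * s powr \<alpha>"
      proof -
        have "(P * s / 8) powr \<alpha> \<le> (P * (1 - (dist y e)\<^sup>2) / 4) powr \<alpha>"
          using q P s a1 by (intro powr_mono2) (auto simp: divide_right_mono)
        moreover have "(P * s / 8) powr \<alpha> = (P/8) powr \<alpha> * s powr \<alpha>"
          using P s by (simp add: powr_mult[symmetric])
        ultimately have "L * s powr \<alpha> \<le> kap * 2 powr (2 * \<alpha> - N) * (2 powr (- N / 2) * ((P * (1 - (dist y e)\<^sup>2) / 4) powr \<alpha> / \<alpha>))"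
          unfolding L_def using kap a1 by (simp add: divide_right_mono mult_ac)
        also have "\<dots> \<le> green_ball \<alpha> e x y"
          using Gl[OF yB yx] unfolding kap_def N_def P_def by (simp add: mult_ac)
        finally show ?thesis .
      qed
      have ny0: "norm (y + s *\<^sub>R e) > 0"
      proof -
        have "norm (y + s *\<^sub>R e) \<ge> s + y $ k" "y $ k > 0"
          using comp_pos_ball[of y k s] yB s unfolding e_def by auto
        then show ?thesis using s by linarith
      qed
      have ny1: "norm (y + s *\<^sub>R e) \<le> (5/2) * s"
      proof -
        have "y + s *\<^sub>R e = (y - s *\<^sub>R e) + (2 * s) *\<^sub>R e" by (simp add: vec_eq_iff algebra_simps)
        then have "norm (y + s *\<^sub>R e) \<le> norm (y - s *\<^sub>R e) + norm ((2 * s) *\<^sub>R e)"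
          by (metis norm_triangle_ineq)
        also have "\<dots> \<le> s/2 + 2 * s" using dys s ne by (simp add: dist_norm)
        finally show ?thesis by simp
      qed
      have K1: "c / ((5/2) * s) powr p \<le> c / norm (y + s *\<^sub>R e) powr p"
        using ny0 ny1 c0 p0 by (intro divide_left_mono powr_mono2 mult_pos_pos) auto
      have "Lc = (L * s powr \<alpha>) * (c / ((5/2) * s) powr p)" unfolding Lc_def by simp
      also have "\<dots> \<le> green_ball \<alpha> e x y * (c / norm (y + s *\<^sub>R e) powr p)"
        using G1 K1 L c0 Gn[of y] by (intro mult_mono) auto
      finally show ?thesis unfolding f_def .
    qed
    have Sm: "S \<in> sets lborel" unfolding S_def by simp
    have Sfin: "emeasure lborel S \<noteq> \<infinity>" unfolding S_def using emeasure_lborel_ball_finite by (simp add: less_top[symmetric])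
    have iB: "set_integrable lborel B (f s)" using integ s by simp
    have iS: "set_integrable lborel S (f s)" using set_integrable_subset[OF iB Sm SB] .
    have "Kc * s powr (-\<alpha>) = measure lborel S * Lc"
    proof -
      have mS: "measure lborel S = V * (s/2)^CARD('n)"
        unfolding S_def V_def using content_ball[of "s/2" "s *\<^sub>R e"] s by simp
      have "measure lborel S * Lc = V * L * c * ((s/2)^CARD('n) * (s powr \<alpha> / ((5/2) * s) powr (real CARD('n) + 2 * \<alpha>)))"
        unfolding mS Lc_def p_def N_def by (simp add: mult_ac)
      also have "\<dots> = V * L * c * (s powr (-\<alpha>) / 2^CARD('n) / (5/2) powr (real CARD('n) + 2 * \<alpha>))"
        using pow_alg[OF s(1), of "CARD('n)" \<alpha>] by simp
      also have "\<dots> = Kc * s powr (-\<alpha>)" unfolding Kc_def p_def N_def by simp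
      finally show ?thesis by simp
    qed
    also have "\<dots> = (LINT y:S|lborel. Lc)" using set_integral_const[OF Sm Sfin, of Lc] by simp
    also have "\<dots> \<le> (LINT y:S|lborel. f s y)"
    proof (rule set_integral_mono)
      show "set_integrable lborel S (\<lambda>y. Lc)"
        unfolding set_integrable_def using Sm Sfin by (simp add: less_top[symmetric])
      show "set_integrable lborel S (f s)" by (rule iS)
      fix y assume "y \<in> S" then show "Lc \<le> f s y" by (rule pw)
    qed
    also have "\<dots> \<le> (LINT y:B|lborel. f s y)"
      using iS iB SB f0[of s] unfolding set_lebesgue_integral_def set_integrable_def
      by (intro integral_mono) (auto simp: indicator_def)
    finally show ?thesis .
  qed
  have ev: "eventually (\<lambda>s. Kc * s powr (-\<alpha>) \<le> (LINT y:B|lborel. f s y)) (at_right 0)"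
    unfolding eventually_at_right_field using s0 low by blast
  have lim: "filterlim (\<lambda>s. Kc * s powr (-\<alpha>)) at_top (at_right 0)"
    using Kc a1 by real_asymp
  have "filterlim (\<lambda>s. LINT y:B|lborel. f s y) at_top (at_right 0)"
    by (rule filterlim_at_top_mono[OF lim ev])
  then show ?thesis unfolding B_def f_def e_def c_def p_def N_def .
qed

end
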